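(* Let $E$ be a finite-dimensional real affine space and let $G(E)$ be the set of generalized affine functions on $E$, equipped with the topology of pointwise convergence. Then $G(E)$ is a compact Hausdorff space.
   Context: A generalized affine function on $E$ is a function $E\to\overline{\mathbb{R}}=\mathbb{R}\cup\{\pm\infty\}$ that is both convex and concave (extended-real-valued sense). The topology of pointwise convergence is the subspace topology from the product topology on $\overline{\mathbb{R}}^{E}$, with $\overline{\mathbb{R}}$ carrying its usual order topology. *)

theory Defs
  imports "HOL-Analysis.Analysis" "HOL-Library.Extended_Real"
begin

text \<open>Convexity / concavity of an extended-real-valued function, via convexity
of the epigraph / hypograph in E \<times> R (Rockafellar's convention).\<close>

definition ext_convex :: "('a::real_vector \<Rightarrow> ereal) \<Rightarrow> bool" where
  "ext_convex f \<longleftrightarrow> convex {(x, t::real). f x \<le> ereal t}"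

definition ext_concave :: "('a::real_vector \<Rightarrow> ereal) \<Rightarrow> bool" where
  "ext_concave f \<longleftrightarrow> convex {(x, t::real). ereal t \<le> f x}"

definition gen_affine :: "('a::real_vector \<Rightarrow> ereal) set" where
  "gen_affine = {f. ext_convex f \<and> ext_concave f}"

definition gen_affine_topology :: "('a::real_vector \<Rightarrow> ereal) topology" where
  "gen_affine_topology = subtopology (product_topology (\<lambda>_. euclidean) UNIV) gen_affine"

end

theory Submission
  imports Defs
begin

lemma conv_char:
  "ext_convex f \<longleftrightarrow> (\<forall>x y s t u v. u \<ge> 0 \<longrightarrow> v \<ge> 0 \<longrightarrow> u + v = 1 \<longrightarrow>
      f x < ereal s \<longrightarrow> f y < ereal t \<longrightarrow> f (u *\<^sub>R x + v *\<^sub>R y) \<le> ereal (u * s + v * t))"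
  (is "_ \<longleftrightarrow> ?R")
proof
  assume c: "ext_convex f"
  show ?R
  proof (intro allI impI)
    fix x y s t u v assume h: "(u::real) \<ge> 0" "(v::real) \<ge> 0" "u + v = 1" "f x < ereal s" "f y < ereal t"
    have "u *\<^sub>R (x, s) + v *\<^sub>R (y, t) \<in> {(x, t::real). f x \<le> ereal t}"
      using convexD[OF c[unfolded ext_convex_def], of "(x, s)" "(y, t)" u v] h by simp
    then show "f (u *\<^sub>R x + v *\<^sub>R y) \<le> ereal (u * s + v * t)" by simp
  qed
next
  assume r: ?R
  show "ext_convex f" unfolding ext_convex_def convex_def
  proof (intro ballI allI impI)
    fix p q :: "'a \<times> real" and u v :: real
    assume p: "p \<in> {(x, t). f x \<le> ereal t}" and q: "q \<in> {(x, t). f x \<le> ereal t}"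
      and h: "0 \<le> u" "0 \<le> v" "u + v = 1"
    obtain x s where ps: "p = (x, s)" by (cases p)
    obtain y t where qt: "q = (y, t)" by (cases q)
    have fx: "f x \<le> ereal s" and fy: "f y \<le> ereal t" using p q ps qt by auto
    have "f (u *\<^sub>R x + v *\<^sub>R y) \<le> ereal (u * s + v * t)"
    proof (rule ereal_le_epsilon2)
      fix e :: real assume e: "0 < e"
      have "f (u *\<^sub>R x + v *\<^sub>R y) \<le> ereal (u * (s+e) + v * (t+e))"
      proof -
        have a: "f x < ereal (s+e)" using le_less_trans[OF fx] e by simp
        have b: "f y < ereal (t+e)" using le_less_trans[OF fy] e by simp
        show ?thesis using r[rule_format, OF h(1) h(2) h(3) a b] .
      qed
      also have "u * (s+e) + v * (t+e) = u * s + v * t + (u + v) * e" by (simp add: algebra_simps)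
      also have "\<dots> = u * s + v * t + e" using h by simp
      finally show "f (u *\<^sub>R x + v *\<^sub>R y) \<le> ereal (u * s + v * t) + ereal e" by simp
    qed
    then show "u *\<^sub>R p + v *\<^sub>R q \<in> {(x, t). f x \<le> ereal t}" using ps qt by simp
  qed
qed

lemma conc_char:
  "ext_concave f \<longleftrightarrow> (\<forall>x y s t u v. u \<ge> 0 \<longrightarrow> v \<ge> 0 \<longrightarrow> u + v = 1 \<longrightarrow>
      ereal s < f x \<longrightarrow> ereal t < f y \<longrightarrow> ereal (u * s + v * t) \<le> f (u *\<^sub>R x + v *\<^sub>R y))"
  (is "_ \<longleftrightarrow> ?R")
proof
  assume c: "ext_concave f"
  show ?R
  proof (intro allI impI)
    fix x y s t u v assume h: "(u::real) \<ge> 0" "(v::real) \<ge> 0" "u + v = 1" "ereal s < f x" "ereal t < f y"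
    have "u *\<^sub>R (x, s) + v *\<^sub>R (y, t) \<in> {(x, t::real). ereal t \<le> f x}"
      using convexD[OF c[unfolded ext_concave_def], of "(x, s)" "(y, t)" u v] h by simp
    then show "ereal (u * s + v * t) \<le> f (u *\<^sub>R x + v *\<^sub>R y)" by simp
  qed
next
  assume r: ?R
  show "ext_concave f" unfolding ext_concave_def convex_def
  proof (intro ballI allI impI)
    fix p q :: "'a \<times> real" and u v :: real
    assume p: "p \<in> {(x, t). ereal t \<le> f x}" and q: "q \<in> {(x, t). ereal t \<le> f x}"
      and h: "0 \<le> u" "0 \<le> v" "u + v = 1"
    obtain x s where ps: "p = (x, s)" by (cases p)
    obtain y t where qt: "q = (y, t)" by (cases q)
    have fx: "ereal s \<le> f x" and fy: "ereal t \<le> f y" using p q ps qt by auto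
    have "- f (u *\<^sub>R x + v *\<^sub>R y) \<le> - ereal (u * s + v * t)"
    proof (rule ereal_le_epsilon2)
      fix e :: real assume e: "0 < e"
      have "ereal (u * (s-e) + v * (t-e)) \<le> f (u *\<^sub>R x + v *\<^sub>R y)"
      proof -
        have a: "ereal (s-e) < f x" using less_le_trans[OF _ fx] e by simp
        have b: "ereal (t-e) < f y" using less_le_trans[OF _ fy] e by simp
        show ?thesis using r[rule_format, OF h(1) h(2) h(3) a b] .
      qed
      also have "u * (s-e) + v * (t-e) = u * s + v * t - (u + v) * e" by (simp add: algebra_simps)
      also have "\<dots> = u * s + v * t - e" using h by simp
      finally show "- f (u *\<^sub>R x + v *\<^sub>R y) \<le> - ereal (u * s + v * t) + ereal e"
        by (cases "f (u *\<^sub>R x + v *\<^sub>R y)") auto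
    qed
    then have "ereal (u * s + v * t) \<le> f (u *\<^sub>R x + v *\<^sub>R y)"
      by (metis ereal_minus_le_minus uminus_ereal.simps(1))
    then show "u *\<^sub>R p + v *\<^sub>R q \<in> {(x, t). ereal t \<le> f x}" using ps qt by simp
  qed
qed


abbreviation PT :: "('a \<Rightarrow> ereal) topology" where
  "PT \<equiv> product_topology (\<lambda>_. euclidean) UNIV"

lemma topspace_PT: "topspace PT = UNIV"
  by simp

lemma openin_lt: "openin PT {g. g z < c}"
proof -
  have "openin PT {g \<in> topspace PT. g z \<in> {..<c}}"
    by (rule openin_continuous_map_preimage[OF continuous_map_product_projection]) auto
  then show ?thesis by simp
qed

lemma openin_gt: "openin PT {g. c < g z}"
proof -
  have "openin PT {g \<in> topspace PT. g z \<in> {c<..}}"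
    by (rule openin_continuous_map_preimage[OF continuous_map_product_projection]) auto
  then show ?thesis by simp
qed

lemma closed_gen_affine: "closedin PT gen_affine"
  unfolding closedin_def
proof (intro conjI)
  show "gen_affine \<subseteq> topspace PT" by simp
  show "openin PT (topspace PT - gen_affine)"
    unfolding openin_subopen[of _ "topspace PT - gen_affine"]
  proof
    fix f assume "f \<in> topspace PT - gen_affine"
    then have "\<not> ext_convex f \<or> \<not> ext_concave f" unfolding gen_affine_def by auto
    then show "\<exists>T. openin PT T \<and> f \<in> T \<and> T \<subseteq> topspace PT - gen_affine"
    proof
      assume "\<not> ext_convex f"
      then obtain x y s t u v where h: "u \<ge> 0" "v \<ge> 0" "u + v = 1" "f x < ereal s" "f y < ereal t"
        "\<not> f (u *\<^sub>R x + v *\<^sub>R y) \<le> ereal (u * s + v * t)"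
        unfolding conv_char by blast
      let ?T = "{g. g x < ereal s} \<inter> {g. g y < ereal t} \<inter> {g. ereal (u * s + v * t) < g (u *\<^sub>R x + v *\<^sub>R y)}"
      have "openin PT ?T" by (intro openin_Int openin_lt openin_gt)
      moreover have "f \<in> ?T" using h by (auto simp: not_le)
      moreover have "?T \<subseteq> topspace PT - gen_affine"
        using h unfolding gen_affine_def conv_char by (auto simp: not_le) (meson leD)
      ultimately show ?thesis by blast
    next
      assume "\<not> ext_concave f"
      then obtain x y s t u v where h: "u \<ge> 0" "v \<ge> 0" "u + v = 1" "ereal s < f x" "ereal t < f y"
        "\<not> ereal (u * s + v * t) \<le> f (u *\<^sub>R x + v *\<^sub>R y)"
        unfolding conc_char by blast
      let ?T = "{g. ereal s < g x} \<inter> {g. ereal t < g y} \<inter> {g. g (u *\<^sub>R x + v *\<^sub>R y) < ereal (u * s + v * t)}"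
      have "openin PT ?T" by (intro openin_Int openin_lt openin_gt)
      moreover have "f \<in> ?T" using h by (auto simp: not_le)
      moreover have "?T \<subseteq> topspace PT - gen_affine"
        using h unfolding gen_affine_def conc_char by (auto simp: not_le) (meson leD)
      ultimately show ?thesis by blast
    qed
  qed
qed

lemma Hausdorff_ereal: "Hausdorff_space (euclidean :: ereal topology)"
  unfolding Hausdorff_space_def
  by (metis hausdorff open_openin disjnt_def)

theorem theorem2:
  assumes "\<exists>B :: 'a::real_vector set. finite B \<and> span B = UNIV"
  shows "compact_space (gen_affine_topology :: ('a \<Rightarrow> ereal) topology)
     \<and> Hausdorff_space (gen_affine_topology :: ('a \<Rightarrow> ereal) topology)"
proof
  have ce: "compact_space (euclidean :: ereal topology)"
    by (simp add: compact_space_def compact_UNIV)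
  have "compact_space (PT :: ('a \<Rightarrow> ereal) topology)"
    using ce compact_space_product_topology by blast
  then have "compactin PT (gen_affine :: ('a \<Rightarrow> ereal) set)"
    using closedin_compact_space closed_gen_affine by blast
  then show "compact_space (gen_affine_topology :: ('a \<Rightarrow> ereal) topology)"
    unfolding gen_affine_topology_def by (rule compact_space_subtopology)
  show "Hausdorff_space (gen_affine_topology :: ('a \<Rightarrow> ereal) topology)"
    unfolding gen_affine_topology_def
    by (intro Hausdorff_space_subtopology Hausdorff_space_product_topology[THEN iffD2] disjI2 ballI Hausdorff_ereal)
qed

end
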